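(* Let $q$ be a power of an odd prime, let $r\ge1$ be an integer and $t=2r+1$. If for some $\mu\in\mathbb{F}_q$ the polynomial $x^{2r+1}-\mu\in\mathbb{F}_q[x]$ is irreducible, then \[ \chi(G_{q^t})\le\frac{2r+5}{3}\,q^{\frac{4r}{3}+1}+(2r+1)q^{r+1}. \]
   Context: For a power $Q$ of an odd prime, the graph $G_Q$ has vertex set $\mathbb{F}_Q\times\mathbb{F}_Q$, and distinct vertices $(x_1,x_2)$, $(y_1,y_2)$ are adjacent if and only if $(x_1+y_1)^2=x_2+y_2$; $G_Q$ has no loops. $\chi$ denotes the chromatic number. *)

theory Defs
  imports Complex_Main "HOL-Computational_Algebra.Polynomial" "HOL-Computational_Algebra.Primes" "HOL-Library.Cardinality"
begin

definition G_adj :: "('K::field \<times> 'K) \<Rightarrow> ('K \<times> 'K) \<Rightarrow> bool" where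
  "G_adj u v \<longleftrightarrow> u \<noteq> v \<and> (fst u + fst v)^2 = snd u + snd v"

definition proper_colouring :: "('v \<Rightarrow> 'v \<Rightarrow> bool) \<Rightarrow> 'v set \<Rightarrow> nat \<Rightarrow> ('v \<Rightarrow> nat) \<Rightarrow> bool" where
  "proper_colouring E V k f \<longleftrightarrow>
     (\<forall>v\<in>V. f v < k) \<and> (\<forall>u\<in>V. \<forall>v\<in>V. E u v \<longrightarrow> f u \<noteq> f v)"

definition chromatic_number :: "('v \<Rightarrow> 'v \<Rightarrow> bool) \<Rightarrow> 'v set \<Rightarrow> nat" where
  "chromatic_number E V = (LEAST k. \<exists>f. proper_colouring E V k f)"

end

theory Submission
  imports Defs "HOL-Algebra.Multiplicative_Group" "HOL-Number_Theory.Residues" "HOL-Number_Theory.Cong"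
    "HOL-Library.FuncSet" "HOL-Library.Countable_Set"
begin

hide_const (open) UnivPoly.monom UnivPoly.coeff


definition GP :: "nat \<Rightarrow> nat \<Rightarrow> nat" where
  "GP x d = (\<Sum>i<d. x ^ i)"

lemma GP_add: "GP x (n + m) = GP x n + x ^ n * GP x m"
  unfolding GP_def
  by (induction m) (simp_all add: algebra_simps power_add)

lemma GP_0 [simp]: "GP x 0 = 0" by (simp add: GP_def)

lemma GP_Suc: "GP x (Suc n) = GP x n + x ^ n"
  by (simp add: GP_def)

lemma GP_geom: "x \<ge> 1 \<Longrightarrow> (x - 1) * GP x d = x ^ d - 1"
proof (induction d)
  case 0 then show ?case by simp
next
  case (Suc d)
  have "x ^ d \<ge> 1" using Suc.prems by simp
  have "(x - 1) * GP x (Suc d) = (x ^ d - 1) + (x - 1) * x ^ d"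
    using Suc by (simp add: GP_Suc algebra_simps)
  also have "\<dots> = x ^ Suc d - 1"
    using \<open>x ^ d \<ge> 1\<close> Suc.prems by (simp add: algebra_simps diff_mult_distrib)
  finally show ?case .
qed

lemma GP_mult: "GP x (a * b) = GP x a * GP (x ^ a) b"
proof (induction b)
  case 0 then show ?case by simp
next
  case (Suc b)
  have "GP x (a * Suc b) = GP x (a * b + a)" by (simp add: algebra_simps)
  also have "\<dots> = GP x (a * b) + x ^ (a * b) * GP x a" by (rule GP_add)
  also have "\<dots> = GP x a * GP (x ^ a) (Suc b)"
    using Suc by (simp add: GP_Suc algebra_simps power_mult)
  finally show ?case .
qed

lemma GP_cong1:
  assumes "[x = 1] (mod l)"
  shows "[GP x d = d] (mod l)"
proof (induction d)
  case 0 then show ?case by simp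
next
  case (Suc d)
  have "[x ^ d = 1] (mod l)" using cong_pow[OF assms, of d] by simp
  then show ?case using Suc cong_add unfolding GP_Suc by fastforce
qed

lemma sum_lessThan_id2: "2 * (\<Sum>i<(n::nat). i) = n * (n - 1)"
proof (induction n)
  case (Suc n) then show ?case by (cases n) (simp_all add: algebra_simps)
qed simp

lemma GP_cong2:
  assumes "prime l" "odd l" "l dvd x - 1" "x \<ge> 1"
  shows "\<exists>u. GP x l = l * u \<and> [u = 1] (mod l)"
proof -
  have xi: "x ^ i = 1 + (x - 1) * GP x i" for i
    using GP_geom[OF assms(4), of i] assms(4)
    by (metis add.commute le_add_diff_inverse one_le_power)
  have "GP x l = (\<Sum>i<l. 1 + (x - 1) * GP x i)"
    unfolding GP_def[of x l] by (rule sum.cong) (rule refl, rule xi)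
  also have "\<dots> = l + (x - 1) * (\<Sum>i<l. GP x i)"
    unfolding sum.distrib sum_distrib_left by simp
  finally have eq: "GP x l = l + (x - 1) * (\<Sum>i<l. GP x i)" .
  have x1: "[x = 1] (mod l)"
    using assms(3,4) by (simp add: cong_altdef_nat)
  have "[(\<Sum>i<l. GP x i) = (\<Sum>i<l. i)] (mod l)"
    by (rule cong_sum) (use GP_cong1[OF x1] in auto)
  moreover have "l dvd (\<Sum>i<l. i)"
  proof -
    obtain k where k: "l = 2 * k + 1" using assms(2) oddE by blast
    have "2 * (\<Sum>i<l. i) = l * (2 * k)" using sum_lessThan_id2[of l] k by simp
    then have "(\<Sum>i<l. i) = l * k" by simp
    then show ?thesis by simp
  qed
  ultimately have "l dvd (\<Sum>i<l. GP x i)"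
    using cong_dvd_iff by blast
  then obtain a where a: "(\<Sum>i<l. GP x i) = l * a" by blast
  obtain b where b: "x - 1 = l * b" using assms(3) by blast
  have "GP x l = l * (1 + l * (a * b))"
    unfolding eq a b by (simp add: algebra_simps)
  moreover have "[1 + l * (a * b) = 1] (mod l)"
    unfolding cong_le_nat[OF le_add1] by (rule exI[of _ "a*b"]) simp
  ultimately show ?thesis by blast
qed

lemma dvd_pow_minus1: "x \<ge> 1 \<Longrightarrow> x - 1 dvd x ^ n - (1::nat)"
  using GP_geom[of x n] by (metis dvd_triv_left)

lemma NT2:
  assumes "odd t" "t > 0" "x \<ge> 1" "\<forall>l. prime l \<longrightarrow> l dvd t \<longrightarrow> l dvd x - 1"
  shows "t dvd GP x d \<longleftrightarrow> t dvd d"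
  using assms
proof (induction t arbitrary: x d rule: less_induct)
  case (less t)
  show ?case
  proof (cases "t = 1")
    case True then show ?thesis by simp
  next
    case False
    then obtain l where l: "prime l" "l dvd t" using prime_factor_nat by blast
    then obtain s where ts: "t = l * s" by blast
    have lodd: "odd l" using l(2) less.prems(1) by (meson dvd_trans even_two_times_div_two odd_two_times_div_two_nat dvd_triv_left)
    have sodd: "odd s" using ts less.prems(1) by simp
    have spos: "s > 0" using ts less.prems(2) by simp
    have l1: "l > 1" using l(1) prime_gt_1_nat by blast
    have slt: "s < t" using ts l1 spos by simp
    have lx: "l dvd x - 1" using less.prems(4) l by blast
    have xl: "x ^ l \<ge> 1" using less.prems(3) by simp
    have sdiv: "\<forall>l'. prime l' \<longrightarrow> l' dvd s \<longrightarrow> l' dvd x ^ l - 1"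
    proof (intro allI impI)
      fix l' assume "prime l'" "l' dvd s"
      then have "l' dvd x - 1" using less.prems(4) ts by simp
      then show "l' dvd x ^ l - 1" using dvd_pow_minus1[OF less.prems(3), of l] dvd_trans by blast
    qed
    have IH: "s dvd GP (x ^ l) d' \<longleftrightarrow> s dvd d'" for d'
      using less.IH[OF slt sodd spos xl sdiv] .
    obtain u where u: "GP x l = l * u" "[u = 1] (mod l)"
      using GP_cong2[OF l(1) lodd lx less.prems(3)] by blast
    have x1: "[x = 1] (mod l)"
      using lx less.prems(3) by (simp add: cong_altdef_nat)
    show ?thesis
    proof
      assume tdvd: "t dvd GP x d"
      then have "l dvd GP x d" using ts dvd_mult_left by blast
      moreover have "[GP x d = d] (mod l)" by (rule GP_cong1[OF x1])
      ultimately have "l dvd d" using cong_dvd_iff by blast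
      then obtain d' where d: "d = l * d'" by blast
      have eq: "GP x d = l * (u * GP (x ^ l) d')" using d u GP_mult by simp
      have "s dvd u * GP (x ^ l) d'"
        using tdvd unfolding eq ts using l1 by simp
      moreover have "coprime s u"
      proof (rule ccontr)
        assume "\<not> coprime s u"
        then obtain c where c: "c dvd s" "c dvd u" "\<not> is_unit c" by (rule not_coprimeE)
        then obtain l' where l': "prime l'" "l' dvd c" using prime_factor_nat by auto
        have "l' dvd t" using l'(2) c(1) ts by (meson dvd_trans dvd_triv_right)
        then have "l' dvd x - 1" using less.prems(4) l'(1) by blast
        then have x1': "[x = 1] (mod l')" using less.prems(3) by (simp add: cong_altdef_nat)
        have "l' dvd GP x l" using l'(2) c(2) u(1) by (metis dvd_mult2 dvd_trans mult.commute)
        moreover have "[GP x l = l] (mod l')" by (rule GP_cong1[OF x1'])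
        ultimately have "l' dvd l" using cong_dvd_iff by blast
        then have "l' = l" using l(1) l'(1) by (simp add: primes_dvd_imp_eq)
        then have "l dvd u" using l'(2) c(2) dvd_trans by blast
        then have "l dvd 1" using u(2) cong_dvd_iff by blast
        then show False using l1 by simp
      qed
      ultimately have "s dvd GP (x ^ l) d'" using coprime_dvd_mult_right_iff by blast
      then have "s dvd d'" using IH by blast
      then show "t dvd d" using d ts by simp
    next
      assume "t dvd d"
      then obtain k where k: "d = l * (s * k)" using ts by (metis dvdE mult.assoc)
      have "s dvd GP (x ^ l) (s * k)" using IH by simp
      then have "l * s dvd l * (u * GP (x ^ l) (s * k))" by simp
      then show "t dvd GP x d" using k u GP_mult ts by simp
    qed
  qed
qed



lemma ff_power_card1: "(x :: 'a :: {finite,field}) \<noteq> 0 \<Longrightarrow> x ^ (CARD('a) - 1) = 1"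
proof -
  assume x: "x \<noteq> 0"
  let ?S = "UNIV - {0::'a}"
  have cS: "card ?S = CARD('a) - 1" by (simp add: card_Diff_singleton)
  have "(\<Prod>y\<in>?S. x * y) = (\<Prod>y\<in>?S. y)"
    by (rule prod.reindex_bij_witness[of _ "\<lambda>y. y / x" "\<lambda>y. x * y"]) (use x in auto)
  moreover have "(\<Prod>y\<in>?S. x * y) = x ^ card ?S * (\<Prod>y\<in>?S. y)"
    by (simp add: prod.distrib)
  moreover have "(\<Prod>y\<in>?S. y) \<noteq> 0" by (simp add: prod_zero_iff)
  ultimately have "x ^ card ?S = 1" by (metis mult_cancel_right1)
  then show ?thesis using cS by simp
qed

lemma ff_power_card: "(x :: 'a :: {finite,field}) ^ CARD('a) = x"
proof (cases "x = 0")
  case True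
  have "CARD('a) > 0" by (rule finite_UNIV_card_ge_0) simp
  then show ?thesis using True by simp
next
  case False
  have "CARD('a) > 0" by (rule finite_UNIV_card_ge_0) simp
  then have "CARD('a) = Suc (CARD('a) - 1)" by simp
  then have "x ^ CARD('a) = x * x ^ (CARD('a) - 1)" by (metis power_Suc)
  then show ?thesis using ff_power_card1[OF False] by simp
qed

lemma pow_inj_coprime:
  fixes x y :: "'a :: {finite,field}"
  assumes "coprime l (CARD('a) - 1)" "l \<noteq> 0" "x ^ l = y ^ l"
  shows "x = y"
proof (cases "y = 0")
  case True
  then show ?thesis using assms by (simp add: power_0_left)
next
  case False
  define w where "w = x / y"
  have "x \<noteq> 0" using assms(2,3) False by (metis power_0_left power_eq_0_iff)
  then have w0: "w \<noteq> 0" using False by (simp add: w_def)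
  have wl: "w ^ l = 1" using assms(3) False by (simp add: w_def power_divide)
  have wq: "w ^ (CARD('a) - 1) = 1" using ff_power_card1[OF w0] .
  obtain a b where ab: "l * a = (CARD('a) - 1) * b + gcd l (CARD('a) - 1)"
    using bezout_nat[OF assms(2)] by blast
  then have ab1: "l * a = (CARD('a) - 1) * b + 1" using assms(1) by simp
  have "w = w ^ ((CARD('a) - 1) * b + 1)" using wq by (simp add: power_mult)
  also have "\<dots> = w ^ (l * a)" using ab1 by simp
  also have "\<dots> = 1" using wl by (simp add: power_mult)
  finally show ?thesis using False by (simp add: w_def)
qed

lemma prime_dvd_card_minus1:
  fixes \<mu> :: "'a :: {finite,field}"
  assumes irr: "irreducible (monom 1 t - [:\<mu>:])" and l: "prime l" "l dvd t" and t: "t > 0"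
  shows "l dvd CARD('a) - 1"
proof (rule ccontr)
  assume nd: "\<not> l dvd CARD('a) - 1"
  have cop: "coprime l (CARD('a) - 1)" using nd l(1) by (simp add: prime_imp_coprime)
  have l0: "l \<noteq> 0" using l(1) by auto
  have "inj (\<lambda>x::'a. x ^ l)"
    by (rule injI) (rule pow_inj_coprime[OF cop l0])
  then have "surj (\<lambda>x::'a. x ^ l)" using finite_UNIV_inj_surj[of "\<lambda>x::'a. x ^ l"] by simp
  then obtain \<beta> :: 'a where \<beta>: "\<mu> = \<beta> ^ l" by (metis surjD)
  obtain s where ts: "t = l * s" using l(2) by blast
  have l1: "l > 1" using l(1) prime_gt_1_nat by blast
  have s0: "s > 0" using ts t by simp
  have slt: "s < t" using ts l1 s0 by simp
  define A :: "'a poly" where "A = monom 1 s - [:\<beta>:]"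
  define B :: "'a poly" where "B = (\<Sum>i<l. [:\<beta>:]^(l - Suc i) * (monom 1 s)^i)"
  have "monom 1 t - [:\<mu>:] = (monom 1 s) ^ l - [:\<beta>:] ^ l"
    unfolding \<beta> monom_power poly_const_pow ts by (simp add: mult.commute[of s l])
  also have "\<dots> = A * B" unfolding A_def B_def by (rule power_diff_sumr2)
  finally have PAB: "monom 1 t - [:\<mu>:] = A * B" .
  have "A = monom 1 s + [:-\<beta>:]" unfolding A_def by simp
  then have degA: "degree A = s"
    using s0 by (simp add: degree_add_eq_left degree_monom_eq)
  define P :: "'a poly" where "P = monom 1 t - [:\<mu>:]"
  have "P = monom 1 t + [:-\<mu>:]" unfolding P_def by simp
  then have degP0: "degree P = t"
    using t by (simp add: degree_add_eq_left degree_monom_eq)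
  then have degP: "degree (monom 1 t - [:\<mu>:]) = t" unfolding P_def .
  have P0: "monom 1 t - [:\<mu>:] \<noteq> (0 :: 'a poly)" using irr by (simp add: irreducible_def)
  have A0: "A \<noteq> 0" using degA s0 by auto
  have B0: "B \<noteq> 0" using P0 PAB by auto
  have degB: "degree B = t - s" using degP degA PAB degree_mult_eq[OF A0 B0] by simp
  have "\<not> is_unit A" using is_unit_iff_degree[OF A0] degA s0 by simp
  moreover have "\<not> is_unit B" using is_unit_iff_degree[OF B0] degB slt by simp
  moreover have "is_unit A \<or> is_unit B" using irreducibleD[OF irr PAB] .
  ultimately show False by blast
qed



definition tring :: "'a::field ring" where
  "tring = \<lparr>carrier = UNIV, monoid.mult = (\<lambda>x y. x * y), one = 1, ring.zero = 0, add = (\<lambda>x y. x + y)\<rparr>"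

lemma tring_field: "field (tring :: 'a::field ring)"
proof -
  have "\<exists>y. x + y = 0" for x :: 'a
    using add.right_inverse by blast
  moreover have "x \<noteq> 0 \<Longrightarrow> \<exists>y. x * y = 1" for x :: 'a
    by (rule exI[of _ "inverse x"]) auto
  ultimately show ?thesis
    unfolding tring_def
    by unfold_locales (auto simp: algebra_simps Units_def)
qed

lemma tring_pow: "x [^]\<^bsub>(tring :: 'a::field ring)\<^esub> (n::nat) = x ^ n"
proof (induction n)
  case 0 show ?case by (simp add: tring_def nat_pow_def)
next
  case (Suc n)
  have "x [^]\<^bsub>(tring :: 'a::field ring)\<^esub> Suc n = (x [^]\<^bsub>(tring :: 'a::field ring)\<^esub> n) * x"
    by (simp add: tring_def nat_pow_def)
  then show ?case using Suc by (simp add: mult.commute)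
qed

lemma exists_gen:
  "\<exists>g::'a::{finite,field}. g \<noteq> 0 \<and> (\<forall>x. x \<noteq> 0 \<longrightarrow> (\<exists>i. x = g ^ i))"
proof -
  have fin: "finite (carrier (tring :: 'a ring))" unfolding tring_def by simp
  note G = field.finite_field_mult_group_has_gen[OF tring_field fin]
  then obtain a where
    a1: "a \<in> carrier (mult_of (tring :: 'a ring))" and
    a2: "carrier (mult_of (tring :: 'a ring)) = {a [^]\<^bsub>tring\<^esub> i | i::nat. i \<in> UNIV}"
    by (elim bexE) 
  have car: "carrier (mult_of (tring :: 'a ring)) = UNIV - {0}"
    unfolding carrier_mult_of by (simp add: tring_def)
  have "a \<noteq> 0" using a1 car by (simp add: tring_def)
  moreover have "\<exists>i. x = a ^ i" if "x \<noteq> 0" for x :: 'a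
  proof -
    have "x \<in> carrier (mult_of (tring :: 'a ring))" using that car by simp
    then have "x \<in> {a [^]\<^bsub>tring\<^esub> i | i::nat. i \<in> UNIV}" by (rule subst[OF a2])
    then obtain i :: nat where "x = a [^]\<^bsub>tring\<^esub> i" by blast
    then have "x = a ^ i" by (simp only: tring_pow)
    then show ?thesis by blast
  qed
  ultimately show ?thesis by blast
qed



lemma cube_root3: "(3::real) powr (1/3) \<ge> (36/25)"
proof (rule ccontr)
  assume "\<not> (3::real) powr (1/3) \<ge> (36/25)"
  then have lt: "(3::real) powr (1/3) < (36/25)" by simp
  have "((3::real) powr (1/3)) ^ 3 = (3 powr (1/3)) powr (real 3)"
    by (subst powr_realpow) auto
  also have "\<dots> = 3 powr ((1/3) * real 3)" by (rule powr_powr)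
  also have "\<dots> = 3" by simp
  finally have c: "((3::real) powr (1/3)) ^ 3 = 3" .
  have "((3::real) powr (1/3)) ^ 3 < (36/25) ^ 3"
    by (rule power_strict_mono[OF lt]) auto
  then show False using c by (simp add: power3_eq_cube)
qed

lemma real_ineq:
  fixes q :: real and r :: nat
  assumes q: "q \<ge> 3" and r: "r \<ge> 1"
  shows "1 + real (2 * r + 1) * (2 * q ^ (r + 1))
     \<le> (2 * real r + 5) / 3 * q powr (4 * real r / 3 + 1) + (2 * real r + 1) * q ^ (r + 1)"
proof -
  define X where "X = q ^ (r + 1)"
  define Y where "Y = q powr (real r / 3)"
  have X3: "X \<ge> 3"
  proof -
    have "q ^ 1 \<le> q ^ (r + 1)" using q by (intro power_increasing) auto
    then have "q \<le> q ^ (r + 1)" by (simp only: power_one_right)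
    then show ?thesis using q unfolding X_def by linarith
  qed
  have split: "q powr (4 * real r / 3 + 1) = X * Y"
  proof -
    have "q powr (4 * real r / 3 + 1) = q powr (real (r + 1) + real r / 3)"
      by (rule arg_cong[where f="\<lambda>e. q powr e"]) simp
    also have "\<dots> = q powr real (r + 1) * q powr (real r / 3)" by (rule powr_add)
    finally have "q powr (4 * real r / 3 + 1) = q powr real (r + 1) * q powr (real r / 3)" .
    also have "q powr real (r + 1) = X" unfolding X_def by (rule powr_realpow) (use q in linarith)
    finally show ?thesis unfolding Y_def .
  qed
  have e3: "(3::real) powr (real r / 3) = (3 powr (1/3)) ^ r"
  proof -
    have "(3::real) powr (real r / 3) = 3 powr (1/3 * real r)" by simp
    also have "\<dots> = (3 powr (1/3)) powr (real r)" by (rule powr_powr[symmetric])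
    also have "\<dots> = (3 powr (1/3)) ^ r" by (rule powr_realpow) simp
    finally show ?thesis .
  qed
  have "(36/25) ^ r \<le> ((3::real) powr (1/3)) ^ r" by (rule power_mono[OF cube_root3]) simp
  also have "\<dots> = 3 powr (real r / 3)" using e3 by simp
  also have "\<dots> \<le> Y" unfolding Y_def using q by (intro powr_mono2) auto
  finally have Y1: "(36/25) ^ r \<le> Y" .
  have "(36/25) ^ r = (1 + (11/25)::real) ^ r" by simp
  also have "\<dots> \<ge> 1 + real r * (11/25)" by (rule Bernoulli_inequality) simp
  finally have Y2: "Y \<ge> 1 + (11/25) * real r" using Y1 by linarith
  have rr: "real r \<ge> 1" using r by simp
  have Z: "(2 * real r + 5) * (1 + (11/25) * real r) \<ge> 3 * (2 * real r + 1) + 1"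
  proof -
    have "0 \<le> (real r - 45/44)^2" by simp
    then show ?thesis by (simp add: power2_eq_square algebra_simps add_divide_distrib)
  qed
  have "(2 * real r + 5) * (1 + (11/25) * real r) * X \<le> (2 * real r + 5) * Y * X"
    using Y2 X3 rr by (intro mult_right_mono mult_left_mono) auto
  moreover have "(3 * (2 * real r + 1) + 1) * X \<le> (2 * real r + 5) * (1 + (11/25) * real r) * X"
    using Z X3 by (intro mult_right_mono) auto
  ultimately have "3 * (2 * real r + 1) * X + X \<le> (2 * real r + 5) * Y * X"
    by (simp add: algebra_simps)
  then have "3 + 3 * (2 * real r + 1) * X \<le> (2 * real r + 5) * Y * X" using X3 by linarith
  then show ?thesis unfolding split X_def[symmetric] by (simp add: algebra_simps)
qed



lemma chromatic_le:
  fixes col :: "'v \<Rightarrow> 'c"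
  assumes "finite CS" "\<And>v. v \<in> V \<Longrightarrow> col v \<in> CS"
    and "\<And>u v. u \<in> V \<Longrightarrow> v \<in> V \<Longrightarrow> E u v \<Longrightarrow> col u \<noteq> col v"
  shows "chromatic_number E V \<le> card CS"
proof -
  obtain h where h: "bij_betw h CS {0..<card CS}" using ex_bij_betw_finite_nat[OF assms(1)] by blast
  have "proper_colouring E V (card CS) (h \<circ> col)"
    unfolding proper_colouring_def
  proof (intro conjI ballI impI)
    fix v assume "v \<in> V"
    then show "(h \<circ> col) v < card CS" using h assms(2) by (auto simp: bij_betw_def)
  next
    fix u v assume uv: "u \<in> V" "v \<in> V" "E u v"
    then have "col u \<noteq> col v" using assms(3) by blast
    then show "(h \<circ> col) u \<noteq> (h \<circ> col) v"
      using h assms(2) uv by (auto simp: bij_betw_def dest: inj_onD)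
  qed
  then show ?thesis unfolding chromatic_number_def by (intro Least_le) blast
qed

locale fstruct =
  fixes q r t n :: nat and g :: "'a::{finite,field}"
  assumes qpow: "q = CHAR('a) ^ n" and charp: "prime CHAR('a)" and char2: "CHAR('a) \<noteq> 2"
    and npos: "n > 0"
    and card: "CARD('a) = q ^ t" and tr: "t = 2 * r + 1" and r1: "r \<ge> 1"
    and g0: "g \<noteq> 0" and gen: "\<And>x. x \<noteq> 0 \<Longrightarrow> \<exists>i. x = g ^ i"
    and ntq: "\<And>l. prime l \<Longrightarrow> l dvd t \<Longrightarrow> l dvd q - 1"
begin

definition "M = GP q t"

lemma q2: "q \<ge> 2"
proof -
  have "CHAR('a) \<ge> 2" using charp prime_ge_2_nat by blast
  then have "CHAR('a) ^ n \<ge> 2 ^ n" by (simp add: power_mono)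
  moreover have "(2::nat) ^ n \<ge> 2" using npos by (metis One_nat_def Suc_leI power_increasing power_one_right rel_simps(25))
  ultimately show ?thesis using qpow by simp
qed

lemma q_odd: "odd q"
proof -
  have "odd (CHAR('a))" using charp char2 by (metis primes_dvd_imp_eq two_is_prime_nat)  
  then show ?thesis using qpow by simp
qed

lemma q3: "q \<ge> 3" using q2 q_odd by presburger

lemma tpos: "t > 0" using tr by simp
lemma t_odd: "odd t" using tr by simp

lemma QM: "CARD('a) - 1 = (q - 1) * M"
  unfolding M_def card using GP_geom[of q t] q2 by simp

lemma Mpos: "M > 0"
proof -
  have "CARD('a) \<ge> 2" using card q2 tpos by (metis One_nat_def Suc_1 Suc_leI dual_order.trans less_one linorder_not_le one_le_power power_increasing power_one_right rel_simps(25))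
  then show ?thesis using QM by (metis diff_is_0_eq gr0I mult_0_right not_numeral_le_zero one_le_numeral  Suc_1 diff_Suc_1 le_diff_conv linorder_not_less nat_le_linear not_less_eq_eq)
qed

lemma QM1pos: "CARD('a) - 1 > 0"
  using QM Mpos q2 by simp

lemma g_QM: "g ^ (CARD('a) - 1) = 1"
  using ff_power_card1[OF g0] .

lemma g_mod: "g ^ i = g ^ (i mod (CARD('a) - 1))"
proof -
  have "g ^ i = g ^ ((CARD('a) - 1) * (i div (CARD('a) - 1)) + i mod (CARD('a) - 1))" by (metis mult.commute div_mult_mod_eq)
  also have "\<dots> = g ^ (i mod (CARD('a) - 1))" unfolding power_add power_mult g_QM by simp
  finally show ?thesis .
qed

lemma g_inj: "inj_on (\<lambda>i. g ^ i) {..<CARD('a) - 1}"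
proof (rule eq_card_imp_inj_on)
  have "(\<lambda>i. g ^ i) ` {..<CARD('a) - 1} = UNIV - {0}"
  proof
    show "(\<lambda>i. g ^ i) ` {..<CARD('a) - 1} \<subseteq> UNIV - {0}" using g0 by auto
    show "UNIV - {0} \<subseteq> (\<lambda>i. g ^ i) ` {..<CARD('a) - 1}"
    proof
      fix x :: 'a assume "x \<in> UNIV - {0}"
      then obtain i where "x = g ^ i" using gen by blast
      then have "x = g ^ (i mod (CARD('a) - 1))" using g_mod by simp
      moreover have "i mod (CARD('a) - 1) < CARD('a) - 1" using QM1pos by simp
      ultimately show "x \<in> (\<lambda>i. g ^ i) ` {..<CARD('a) - 1}" by blast
    qed
  qed
  then show "card ((\<lambda>i. g ^ i) ` {..<CARD('a) - 1}) = card {..<CARD('a) - 1}"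
    by (simp add: card_Diff_singleton)
qed simp

lemma gen_eq: "g ^ i = g ^ j \<longleftrightarrow> i mod (CARD('a) - 1) = j mod (CARD('a) - 1)"
proof
  assume "g ^ i = g ^ j"
  then have "g ^ (i mod (CARD('a) - 1)) = g ^ (j mod (CARD('a) - 1))" using g_mod by metis
  then show "i mod (CARD('a) - 1) = j mod (CARD('a) - 1)"
    using g_inj QM1pos by (auto dest: inj_onD)
next
  assume "i mod (CARD('a) - 1) = j mod (CARD('a) - 1)"
  then show "g ^ i = g ^ j" using g_mod by metis
qed


lemma frob_add: "(x + y :: 'a) ^ (q ^ j) = x ^ (q ^ j) + y ^ (q ^ j)"
  by (rule freshmans_dream'[OF charp, where n="n*j"]) (simp add: qpow power_mult)

lemma frob_sum: "(sum (f :: _ \<Rightarrow> 'a) A) ^ (q ^ j) = sum (\<lambda>i. f i ^ (q ^ j)) A"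
  by (rule freshmans_dream_sum'[OF charp, where n="n*j"]) (simp add: qpow power_mult)

definition "F = {x :: 'a. x ^ q = x}"

lemma F_pow: "x \<in> F \<Longrightarrow> x ^ (q ^ j) = x"
proof (induction j)
  case 0 then show ?case by simp
next
  case (Suc j)
  have "x ^ (q ^ Suc j) = (x ^ q) ^ (q ^ j)" by (simp add: power_mult)
  then show ?case using Suc by (simp add: F_def)
qed

lemma F_0: "0 \<in> F" using q2 by (simp add: F_def)
lemma F_1: "1 \<in> F" by (simp add: F_def)
lemma F_add: "x \<in> F \<Longrightarrow> y \<in> F \<Longrightarrow> x + y \<in> F"
  using frob_add[of x y 1] by (simp add: F_def)
lemma F_mult: "x \<in> F \<Longrightarrow> y \<in> F \<Longrightarrow> x * y \<in> F"
  by (simp add: F_def power_mult_distrib)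
lemma F_uminus: "x \<in> F \<Longrightarrow> - x \<in> F"
  using q_odd by (simp add: F_def power_minus_odd)
lemma F_diff: "x \<in> F \<Longrightarrow> y \<in> F \<Longrightarrow> x - y \<in> F"
  using F_add[of x "-y"] F_uminus[of y] by simp
lemma F_pow2: "x \<in> F \<Longrightarrow> x ^ k \<in> F"
  by (induction k) (simp_all add: F_1 F_mult)
lemma F_sum: "(\<And>i. i \<in> A \<Longrightarrow> f i \<in> F) \<Longrightarrow> sum f A \<in> F"
  by (induction A rule: infinite_finite_induct) (simp_all add: F_0 F_add)

lemma F_eq: "F = insert 0 ((\<lambda>i. g ^ (M * i)) ` {..<q - 1})"
proof
  show "F \<subseteq> insert 0 ((\<lambda>i. g ^ (M * i)) ` {..<q - 1})"
  proof
    fix x assume xF: "x \<in> F"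
    show "x \<in> insert 0 ((\<lambda>i. g ^ (M * i)) ` {..<q - 1})"
    proof (cases "x = 0")
      case False
      then obtain j0 where "x = g ^ j0" using gen by blast
      define j where "j = j0 mod (CARD('a) - 1)"
      have xj: "x = g ^ j" using \<open>x = g ^ j0\<close> g_mod j_def by simp
      have jlt: "j < (q - 1) * M" using QM QM1pos j_def by (metis mod_less_divisor)
      have "g ^ (j * q) = g ^ j" using xF xj by (simp add: F_def power_mult)
      then have "(j * q) mod (CARD('a) - 1) = j mod (CARD('a) - 1)" using gen_eq by blast
      then have "[j * q = j] (mod (q - 1) * M)" using QM by (simp add: cong_def)
      moreover have "j * q \<ge> j" using q2 by simp
      ultimately have "(q - 1) * M dvd j * q - j" using cong_altdef_nat by blast
      moreover have "j * q - j = j * (q - 1)" by (simp add: diff_mult_distrib2)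
      ultimately have "(q - 1) * M dvd (q - 1) * j" by (simp add: mult.commute)
      then have "M dvd j" using q2 by simp
      then obtain i where ji: "j = M * i" by blast
      have "i < q - 1" using jlt ji Mpos by (simp add: mult.commute)
      then show ?thesis using xj ji by blast
    qed simp
  qed
  show "insert 0 ((\<lambda>i. g ^ (M * i)) ` {..<q - 1}) \<subseteq> F"
  proof
    fix x assume "x \<in> insert 0 ((\<lambda>i. g ^ (M * i)) ` {..<q - 1})"
    then consider "x = 0" | i where "x = g ^ (M * i)" by blast
    then show "x \<in> F"
    proof cases
      case 1 then show ?thesis using F_0 by simp
    next
      case 2
      have "M * i * q = M * i + i * (CARD('a) - 1)"
        using QM q2 by (simp add: algebra_simps)
      then have "(M * i * q) mod (CARD('a) - 1) = (M * i) mod (CARD('a) - 1)" by simp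
      then have "g ^ (M * i * q) = g ^ (M * i)" using gen_eq by blast
      then show ?thesis using 2 by (simp add: F_def power_mult)
    qed
  qed
qed

lemma card_F: "card F = q"
proof -
  have inj: "inj_on (\<lambda>i. g ^ (M * i)) {..<q - 1}"
  proof (rule inj_onI)
    fix i j assume ij: "i \<in> {..<q - 1}" "j \<in> {..<q - 1}" "g ^ (M * i) = g ^ (M * j)"
    then have "(M * i) mod (CARD('a) - 1) = (M * j) mod (CARD('a) - 1)" using gen_eq by blast
    moreover have "M * i < CARD('a) - 1" "M * j < CARD('a) - 1" using ij(1,2) QM Mpos by (auto simp: mult.commute)
    ultimately have "M * i = M * j" by simp
    then show "i = j" using Mpos by simp
  qed
  have "0 \<notin> (\<lambda>i. g ^ (M * i)) ` {..<q - 1}" using g0 by auto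
  then have "card F = Suc (card ((\<lambda>i. g ^ (M * i)) ` {..<q - 1}))" unfolding F_eq by simp
  also have "\<dots> = q" using card_image[OF inj] q2 by simp
  finally show ?thesis .
qed


lemma t_dvd_GP: "t dvd GP q d \<longleftrightarrow> t dvd d"
  by (rule NT2) (use t_odd tpos q2 ntq in auto)

lemma t_dvd_M: "t dvd M" unfolding M_def using t_dvd_GP by simp

definition "a0 = M div t"
definition "\<theta> = g ^ a0"
definition "\<nu> = \<theta> ^ t"

lemma Ma0: "M = a0 * t" unfolding a0_def using t_dvd_M by simp
lemma a0pos: "a0 > 0" using Ma0 Mpos by (metis gr0I mult_0)

lemma theta0: "\<theta> \<noteq> 0" unfolding \<theta>_def using g0 by simp

lemma nu_F: "\<nu> \<in> F"
proof -
  have nu: "\<nu> = g ^ M" unfolding \<nu>_def \<theta>_def Ma0 by (simp add: power_mult)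
  have "M * q = M + (CARD('a) - 1)" using QM q2 by (simp add: algebra_simps)
  then have "(M * q) mod (CARD('a) - 1) = M mod (CARD('a) - 1)" by (simp only: mod_add_self2)
  then have "g ^ (M * q) = g ^ M" using gen_eq by blast
  then show ?thesis unfolding F_def nu by (simp add: power_mult)
qed

lemma theta_one: "\<theta> ^ k = 1 \<longleftrightarrow> (q - 1) * t dvd k"
proof -
  have "\<theta> ^ k = 1 \<longleftrightarrow> g ^ (a0 * k) = g ^ 0" unfolding \<theta>_def by (simp add: power_mult)
  also have "\<dots> \<longleftrightarrow> (a0 * k) mod (CARD('a) - 1) = 0" using gen_eq[of "a0*k" 0] by simp
  also have "\<dots> \<longleftrightarrow> (q - 1) * M dvd a0 * k" using QM by (simp add: dvd_eq_mod_eq_0)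
  also have "\<dots> \<longleftrightarrow> a0 * ((q - 1) * t) dvd a0 * k" unfolding Ma0 by (simp add: algebra_simps)
  also have "\<dots> \<longleftrightarrow> (q - 1) * t dvd k" using a0pos by simp
  finally show ?thesis .
qed

lemma coprime_tq: "coprime t q"
proof (rule ccontr)
  assume "\<not> coprime t q"
  then obtain c where c: "c dvd t" "c dvd q" "\<not> is_unit c" by (rule not_coprimeE)
  then obtain l where l: "prime l" "l dvd c" using prime_factor_nat by auto
  have "l dvd q - 1" using ntq l c dvd_trans by blast
  moreover have "l dvd q" using l c dvd_trans by blast
  ultimately have "l dvd q - (q - 1)" using dvd_diff_nat by blast
  then have "l dvd 1" using q2 by simp
  then show False using l(1) by simp
qed

lemma conj_distinct:
  assumes "a < b" "b < t"
  shows "\<theta> ^ (q ^ a) \<noteq> \<theta> ^ (q ^ b)"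
proof
  assume eq: "\<theta> ^ (q ^ a) = \<theta> ^ (q ^ b)"
  define d where "d = b - a"
  have d: "d > 0" "d < t" using assms d_def by auto
  have qb: "q ^ b = q ^ a + q ^ a * (q ^ d - 1)"
  proof -
    have "q ^ d \<ge> 1" using q2 by simp
    then have "q ^ a * q ^ d = q ^ a + q ^ a * (q ^ d - 1)" by (simp add: algebra_simps)
    then show ?thesis using d_def assms by (simp flip: power_add)
  qed
  have "\<theta> ^ (q ^ a) * \<theta> ^ (q ^ a * (q ^ d - 1)) = \<theta> ^ (q ^ a) * 1"
    using eq unfolding qb power_add by simp
  then have "\<theta> ^ (q ^ a * (q ^ d - 1)) = 1" using theta0 by simp
  then have "(q - 1) * t dvd q ^ a * ((q - 1) * GP q d)"
    using theta_one GP_geom[of q d] q2 by simp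
  then have "(q - 1) * t dvd (q - 1) * (q ^ a * GP q d)" by (simp add: algebra_simps)
  then have "t dvd q ^ a * GP q d" using q2 by simp
  moreover have "coprime t (q ^ a)" using coprime_tq by simp
  ultimately have "t dvd GP q d" using coprime_dvd_mult_right_iff by blast
  then have "t dvd d" using t_dvd_GP by blast
  then show False using d by (simp add: nat_dvd_not_less)
qed

lemma indep:
  assumes cF: "\<And>i. i < t \<Longrightarrow> c i \<in> F" and z: "(\<Sum>i<t. c i * \<theta> ^ i) = 0"
  shows "\<And>i. i < t \<Longrightarrow> c i = 0"
proof -
  define P where "P = (\<Sum>i<t. monom (c i) i)"
  have coeffP: "coeff P k = (if k < t then c k else 0)" for k
    unfolding P_def by (simp add: coeff_sum coeff_monom)
  have poly: "poly P x = (\<Sum>i<t. c i * x ^ i)" for x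
    unfolding P_def by (simp add: poly_sum poly_monom)
  have roots: "poly P (\<theta> ^ (q ^ j)) = 0" for j
  proof -
    have "poly P (\<theta> ^ (q ^ j)) = (\<Sum>i<t. (c i * \<theta> ^ i) ^ (q ^ j))"
      unfolding poly
    proof (rule sum.cong)
      fix i assume "i \<in> {..<t}"
      then have "c i ^ (q ^ j) = c i" using F_pow cF by simp
      then show "c i * (\<theta> ^ q ^ j) ^ i = (c i * \<theta> ^ i) ^ q ^ j"
        by (simp add: power_mult_distrib flip: power_mult) (simp add: mult.commute)
    qed simp
    also have "\<dots> = 0 ^ (q ^ j)" using frob_sum[of "\<lambda>i. c i * \<theta> ^ i" "{..<t}" j] z by simp
    also have "\<dots> = 0" using q2 by simp
    finally show ?thesis .
  qed
  have P0: "P = 0"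
  proof (rule ccontr)
    assume "P \<noteq> 0"
    have "degree P \<le> t - 1" by (rule degree_le) (auto simp: coeffP)
    have "inj_on (\<lambda>j. \<theta> ^ (q ^ j)) {..<t}"
    proof (rule inj_onI)
      fix a b assume ab: "a \<in> {..<t}" "b \<in> {..<t}" "\<theta> ^ (q ^ a) = \<theta> ^ (q ^ b)"
      show "a = b"
      proof (rule ccontr)
        assume "a \<noteq> b"
        then consider "a < b" | "b < a" by linarith
        then show False using ab conj_distinct by cases (auto, metis)
      qed
    qed
    then have "card ((\<lambda>j. \<theta> ^ (q ^ j)) ` {..<t}) = t" by (simp add: card_image)
    moreover have "(\<lambda>j. \<theta> ^ (q ^ j)) ` {..<t} \<subseteq> {x. poly P x = 0}" using roots by auto
    ultimately have "t \<le> card {x. poly P x = 0}"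
      by (metis card_mono finite)
    also have "\<dots> \<le> degree P" by (rule card_poly_roots_bound[OF \<open>P \<noteq> 0\<close>])
    finally show False using \<open>degree P \<le> t - 1\<close> tpos by simp
  qed
  fix i assume "i < t"
  then show "c i = 0" using coeffP[of i] P0 by simp
qed


definition "Phi c = (\<Sum>i<t. c i * \<theta> ^ i)"
definition "Bset = PiE {..<t} (\<lambda>_. F)"
definition "coord x = the_inv_into Bset Phi x"

lemma Phi_inj: "inj_on Phi Bset"
proof (rule inj_onI)
  fix c c' assume c: "c \<in> Bset" "c' \<in> Bset" "Phi c = Phi c'"
  have "(\<Sum>i<t. (c i - c' i) * \<theta> ^ i) = 0"
    using c(3) unfolding Phi_def by (simp add: algebra_simps sum_subtractf)
  moreover have "c i - c' i \<in> F" if "i < t" for i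
    using c(1,2) that by (intro F_diff) (auto simp: Bset_def)
  ultimately have "c i - c' i = 0" if "i < t" for i
    using indep[of "\<lambda>i. c i - c' i"] that by blast
  then show "c = c'"
    using c(1,2) unfolding Bset_def by (intro extensionalityI[of _ "{..<t}"]) (auto simp: PiE_def)
qed

lemma card_Bset: "card Bset = CARD('a)"
  unfolding Bset_def card by (simp add: card_PiE card_F)

lemma Phi_surj: "Phi ` Bset = UNIV"
proof -
  have "card (Phi ` Bset) = CARD('a)" using card_image[OF Phi_inj] card_Bset by simp
  then show ?thesis by (simp add: card_eq_UNIV_imp_eq_UNIV)
qed

lemma coord_B: "coord x \<in> Bset"
  unfolding coord_def using Phi_surj Phi_inj by (metis UNIV_I the_inv_into_into subsetI)

lemma coord_Phi: "Phi (coord x) = x"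
  unfolding coord_def using Phi_surj Phi_inj by (metis UNIV_I f_the_inv_into_f)

lemma coord_F: "i < t \<Longrightarrow> coord x i \<in> F"
  using coord_B[of x] by (auto simp: Bset_def)

lemma coord_repr: "x = (\<Sum>i<t. coord x i * \<theta> ^ i)"
  using coord_Phi[of x] by (simp add: Phi_def)

lemma coord_unique:
  assumes "\<And>i. i < t \<Longrightarrow> d i \<in> F" "x = (\<Sum>i<t. d i * \<theta> ^ i)" "i < t"
  shows "coord x i = d i"
proof -
  have rB: "restrict d {..<t} \<in> Bset" using assms(1) by (auto simp: Bset_def)
  have "Phi (restrict d {..<t}) = x" using assms(2) by (simp add: Phi_def)
  then have "coord x = restrict d {..<t}"
    unfolding coord_def using Phi_inj rB by (metis the_inv_into_f_f)
  then show ?thesis using assms(3) by simp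
qed

lemma coord_add: "i < t \<Longrightarrow> coord (x + y) i = coord x i + coord y i"
proof (rule coord_unique)
  show "\<And>i. i < t \<Longrightarrow> coord x i + coord y i \<in> F" by (intro F_add coord_F)
  have "x + y = (\<Sum>i<t. coord x i * \<theta> ^ i) + (\<Sum>i<t. coord y i * \<theta> ^ i)"
    using coord_repr[of x] coord_repr[of y] by (rule arg_cong2[where f="(+)"])
  also have "\<dots> = (\<Sum>i<t. (coord x i + coord y i) * \<theta> ^ i)"
    by (simp add: distrib_right sum.distrib)
  finally show "x + y = (\<Sum>i<t. (coord x i + coord y i) * \<theta> ^ i)" .
qed

lemma coord_diff: "i < t \<Longrightarrow> coord (x - y) i = coord x i - coord y i"
proof (rule coord_unique)
  show "\<And>i. i < t \<Longrightarrow> coord x i - coord y i \<in> F" by (intro F_diff coord_F)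
  have "x - y = (\<Sum>i<t. coord x i * \<theta> ^ i) - (\<Sum>i<t. coord y i * \<theta> ^ i)"
    using coord_repr[of x] coord_repr[of y] by (rule arg_cong2[where f="(-)"])
  also have "\<dots> = (\<Sum>i<t. (coord x i - coord y i) * \<theta> ^ i)"
    by (simp add: left_diff_distrib sum_subtractf)
  finally show "x - y = (\<Sum>i<t. (coord x i - coord y i) * \<theta> ^ i)" .
qed

lemma coord_zero: "i < t \<Longrightarrow> coord 0 i = 0"
  by (rule coord_unique) (auto intro: F_0)

lemma coord_eq0: "(\<And>i. i < t \<Longrightarrow> coord x i = 0) \<Longrightarrow> x = 0"
  using coord_repr[of x] by simp


definition "hh m = (m * (r + 1)) mod t"
definition "Iset m = (\<lambda>j. (hh m + j) mod t) ` {1..r}"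

lemma Iset_sub: "Iset m \<subseteq> {..<t}"
  unfolding Iset_def using tpos by auto

lemma Iset_card: "card (Iset m) = r"
proof -
  have "inj_on (\<lambda>j. (hh m + j) mod t) {1..r}"
  proof (rule inj_onI)
    fix a b assume ab: "a \<in> {1..r}" "b \<in> {1..r}" "(hh m + a) mod t = (hh m + b) mod t"
    then have "[hh m + a = hh m + b] (mod t)" by (simp add: cong_def)
    then have "[a = b] (mod t)" by (simp add: cong_add_lcancel_nat)
    moreover have "a < t" "b < t" using ab(1,2) tr by auto
    ultimately show "a = b" by (simp add: cong_def)
  qed
  then show ?thesis unfolding Iset_def by (simp add: card_image)
qed

lemma Iset_sum:
  assumes "m < t" "i \<in> Iset m" "j \<in> Iset m"
  shows "(i + j) mod t \<noteq> m"
proof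
  assume eq: "(i + j) mod t = m"
  obtain a b where ab: "a \<in> {1..r}" "b \<in> {1..r}" "i = (hh m + a) mod t" "j = (hh m + b) mod t"
    using assms(2,3) unfolding Iset_def by blast
  have c1: "[i = hh m + a] (mod t)" "[j = hh m + b] (mod t)" using ab by (simp_all add: cong_def)
  have c2: "[hh m = m * (r + 1)] (mod t)" by (simp add: cong_def hh_def)
  have "[i + j = (m * (r + 1)) + (m * (r + 1)) + (a + b)] (mod t)"
  proof -
    have "[i + j = (hh m + a) + (hh m + b)] (mod t)" using c1 by (rule cong_add)
    moreover have "[(hh m + a) + (hh m + b) = (m * (r + 1) + a) + (m * (r + 1) + b)] (mod t)"
      using c2 by (intro cong_add) (simp_all add: cong_refl)
    ultimately show ?thesis by (metis (no_types, lifting) add.commute add.left_commute cong_trans)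
  qed
  moreover have "(m * (r + 1)) + (m * (r + 1)) + (a + b) = m * t + (m + (a + b))"
    using tr by (simp add: algebra_simps)
  moreover have "[m * t + (m + (a + b)) = m + (a + b)] (mod t)" by (simp add: cong_def)
  ultimately have "[i + j = m + (a + b)] (mod t)" by (metis cong_trans)
  moreover have "[i + j = m] (mod t)" using eq assms(1) by (simp add: cong_def)
  ultimately have "[m + (a + b) = m + 0] (mod t)" by (metis cong_sym cong_trans add_0_right)
  then have "[a + b = 0] (mod t)" by (simp only: cong_add_lcancel_nat)
  then have "t dvd a + b" by (simp add: cong_0_iff)
  moreover have "0 < a + b" "a + b < t" using ab(1,2) tr by auto
  ultimately show False by (simp add: nat_dvd_not_less)
qed

lemma theta_pow: "\<theta> ^ k = \<nu> ^ (k div t) * \<theta> ^ (k mod t)"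
proof -
  have "\<theta> ^ k = \<theta> ^ (t * (k div t) + k mod t)" by simp
  also have "\<dots> = (\<theta> ^ t) ^ (k div t) * \<theta> ^ (k mod t)" by (simp only: power_add power_mult)
  finally show ?thesis unfolding \<nu>_def .
qed

lemma sq_coord:
  assumes m: "m < t" and w: "\<And>k. k < t \<Longrightarrow> k \<notin> Iset m \<Longrightarrow> coord w k = 0"
  shows "coord (w ^ 2) m = 0"
proof -
  define I where "I = Iset m"
  define c where "c = coord w"
  have wI: "w = (\<Sum>i\<in>I. c i * \<theta> ^ i)"
  proof -
    have "w = (\<Sum>i<t. c i * \<theta> ^ i)" unfolding c_def by (rule coord_repr)
    also have "\<dots> = (\<Sum>i\<in>I. c i * \<theta> ^ i)"
      by (rule sum.mono_neutral_right) (use Iset_sub w in \<open>auto simp: I_def c_def\<close>)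
    finally show ?thesis .
  qed
  define X where "X i j = c i * c j * \<nu> ^ ((i + j) div t)" for i j
  define d where "d k = (\<Sum>i\<in>I. \<Sum>j\<in>I. if (i + j) mod t = k then X i j else 0)" for k
  have "w ^ 2 = (\<Sum>i\<in>I. \<Sum>j\<in>I. (c i * \<theta> ^ i) * (c j * \<theta> ^ j))"
    unfolding power2_eq_square wI by (rule sum_product)
  also have "\<dots> = (\<Sum>i\<in>I. \<Sum>j\<in>I. X i j * \<theta> ^ ((i + j) mod t))"
    by (intro sum.cong refl) (simp add: X_def theta_pow[of "_ + _"] power_add[symmetric] algebra_simps)
  also have "\<dots> = (\<Sum>i\<in>I. \<Sum>j\<in>I. \<Sum>k<t. (if (i + j) mod t = k then X i j else 0) * \<theta> ^ k)"
  proof (intro sum.cong refl)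
    fix i j
    have "(i + j) mod t < t" using tpos by simp
    then show "X i j * \<theta> ^ ((i + j) mod t) = (\<Sum>k<t. (if (i + j) mod t = k then X i j else 0) * \<theta> ^ k)"
      by (simp add: if_distrib[of "\<lambda>x. x * _"] cong: if_cong)
  qed
  also have "\<dots> = (\<Sum>k<t. d k * \<theta> ^ k)"
    unfolding d_def sum_distrib_right
    by (subst sum.swap) (subst (2) sum.swap, rule refl)
  finally have sq: "w ^ 2 = (\<Sum>k<t. d k * \<theta> ^ k)" .
  have dF: "d k \<in> F" for k
    unfolding d_def X_def
    by (intro F_sum) (auto intro!: F_mult F_pow2 nu_F coord_F F_0 simp: c_def I_def dest: subsetD[OF Iset_sub])
  have "coord (w ^ 2) m = d m" by (rule coord_unique[OF _ sq m]) (use dF in auto)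
  also have "d m = 0" unfolding d_def using Iset_sum[OF m] by (auto simp: I_def)
  finally show ?thesis .
qed


definition "sgnK (c::'a) = (to_nat_on (UNIV::'a set) c < to_nat_on (UNIV::'a set) (- c))"

lemma two_ne0: "(2::'a) \<noteq> 0"
proof
  assume "(2::'a) = 0"
  then have "of_nat 2 = (0::'a)" by simp
  then have "CHAR('a) dvd 2" by (simp only: of_nat_eq_0_iff_char_dvd)
  then show False using charp char2 by (metis prime_nat_iff two_is_prime_nat primes_dvd_imp_eq)
qed

lemma sgnK_opp: "c \<noteq> 0 \<Longrightarrow> sgnK c \<noteq> sgnK (- c)"
proof
  assume c: "c \<noteq> 0" "sgnK c = sgnK (- c)"
  have cnt: "countable (UNIV :: 'a set)" by (simp add: countable_finite)
  have "to_nat_on (UNIV::'a set) c = to_nat_on (UNIV::'a set) (- c)"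
    using c(2) unfolding sgnK_def by auto
  then have "c = - c" using inj_on_to_nat_on[OF cnt] by (auto dest: inj_onD)
  then have "2 * c = 0" by (metis mult_2 add_eq_0_iff2)
  then show False using c(1) two_ne0 by simp
qed

definition "Ev v = snd v - 2 * (fst v) ^ 2"
definition "mm v = (LEAST i. i < t \<and> coord (Ev v) i \<noteq> 0)"
definition "col v = (if Ev v = 0 then None else
   Some (mm v, restrict (coord (fst v)) ({..<t} - Iset (mm v)), sgnK (coord (Ev v) (mm v))))"

lemma mm_prop:
  assumes "Ev v \<noteq> 0"
  shows "mm v < t" "coord (Ev v) (mm v) \<noteq> 0"
proof -
  have "\<exists>i. i < t \<and> coord (Ev v) i \<noteq> 0" using coord_eq0 assms by blast
  then have "mm v < t \<and> coord (Ev v) (mm v) \<noteq> 0" unfolding mm_def by (rule LeastI_ex)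
  then show "mm v < t" "coord (Ev v) (mm v) \<noteq> 0" by auto
qed

definition "CS = insert None (Some ` (SIGMA m:{..<t}. PiE ({..<t} - Iset m) (\<lambda>_. F) \<times> (UNIV :: bool set)))"

lemma col_in: "col v \<in> CS"
proof (cases "Ev v = 0")
  case False
  then show ?thesis using mm_prop[OF False] coord_F
    unfolding col_def CS_def by auto
qed (simp add: col_def CS_def)

lemma finite_F: "finite F" by simp

lemma card_CS: "card CS \<le> 1 + t * (2 * q ^ (r + 1))"
proof -
  have cPi: "card (PiE ({..<t} - Iset m) (\<lambda>_. F)) = q ^ (r + 1)" for m
  proof -
    have "card ({..<t} - Iset m) = t - r" using card_Diff_subset[OF finite_subset[OF Iset_sub[of m]] Iset_sub[of m]] Iset_card[of m] by simp
    then show ?thesis by (simp add: card_PiE card_F tr)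
  qed
  have fin: "finite (SIGMA m:{..<t}. PiE ({..<t} - Iset m) (\<lambda>_. F) \<times> (UNIV :: bool set))"
    by (intro finite_SigmaI finite_cartesian_product finite_PiE) auto
  have "card CS \<le> Suc (card (Some ` (SIGMA m:{..<t}. PiE ({..<t} - Iset m) (\<lambda>_. F) \<times> (UNIV :: bool set))))"
    unfolding CS_def by (rule card_insert_le_m1) (auto intro: fin)
  also have "card (Some ` (SIGMA m:{..<t}. PiE ({..<t} - Iset m) (\<lambda>_. F) \<times> (UNIV :: bool set)))
     = card (SIGMA m:{..<t}. PiE ({..<t} - Iset m) (\<lambda>_. F) \<times> (UNIV :: bool set))"
    by (rule card_image) simp
  also have "\<dots> = (\<Sum>m<t. card (PiE ({..<t} - Iset m) (\<lambda>_. F) \<times> (UNIV :: bool set)))"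
    by (rule card_SigmaI) (auto intro!: finite_cartesian_product finite_PiE)
  also have "\<dots> = (\<Sum>m<t. 2 * q ^ (r + 1))"
    by (rule sum.cong) (auto simp: card_cartesian_product cPi)
  finally show ?thesis by simp
qed

lemma col_proper:
  assumes "G_adj u v" shows "col u \<noteq> col v"
proof
  assume eq: "col u = col v"
  obtain x1 x2 where u: "u = (x1, x2)" by (cases u)
  obtain y1 y2 where v: "v = (y1, y2)" by (cases v)
  have uv: "u \<noteq> v" and adj: "(x1 + y1) ^ 2 = x2 + y2" using assms u v by (auto simp: G_adj_def)
  have key: "(x1 - y1) ^ 2 + Ev u + Ev v = 0"
    using adj unfolding Ev_def u v by (simp add: power2_eq_square algebra_simps)
  show False
  proof (cases "Ev u = 0")
    case True
    then have "Ev v = 0" using eq by (auto simp: col_def split: if_splits)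
    then have "(x1 - y1) ^ 2 = 0" using key True by simp
    then have "x1 = y1" by simp
    then have "x2 = y2" using True \<open>Ev v = 0\<close> unfolding Ev_def u v by simp
    then show False using uv u v \<open>x1 = y1\<close> by simp
  next
    case False
    then have Fv: "Ev v \<noteq> 0" using eq by (auto simp: col_def split: if_splits)
    have same: "mm u = mm v" "restrict (coord x1) ({..<t} - Iset (mm u)) = restrict (coord y1) ({..<t} - Iset (mm v))"
       "sgnK (coord (Ev u) (mm u)) = sgnK (coord (Ev v) (mm v))"
      using eq False Fv unfolding col_def u v by auto
    define m where "m = mm u"
    have mt: "m < t" using mm_prop[OF False] m_def by simp
    have w: "coord (x1 - y1) k = 0" if "k < t" "k \<notin> Iset m" for k
    proof -
      have "coord x1 k = coord y1 k" using same(1,2) that unfolding m_def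
        by (metis (no_types, lifting) Diff_iff lessThan_iff restrict_apply')
      then show ?thesis using coord_diff[OF that(1)] by simp
    qed
    have sq0: "coord ((x1 - y1) ^ 2) m = 0" by (rule sq_coord[OF mt w])
    have "coord ((x1 - y1) ^ 2 + Ev u + Ev v) m = 0" using key coord_zero[OF mt] by simp
    then have "coord (Ev u) m + coord (Ev v) m = 0" using sq0 coord_add[OF mt] by simp
    then have "coord (Ev v) m = - coord (Ev u) m" by (simp add: eq_neg_iff_add_eq_0 add.commute)
    moreover have "coord (Ev u) m \<noteq> 0" using mm_prop[OF False] m_def by simp
    moreover have "sgnK (coord (Ev u) m) = sgnK (coord (Ev v) m)" using same(1,3) m_def by simp
    ultimately show False using sgnK_opp by metis
  qed
qed

lemma chi_bound: "chromatic_number (G_adj :: 'a \<times> 'a \<Rightarrow> _) UNIV \<le> 1 + t * (2 * q ^ (r + 1))"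
proof -
  have "finite CS" unfolding CS_def by (intro finite.insertI finite_imageI finite_SigmaI finite_cartesian_product finite_PiE) auto
  then have "chromatic_number (G_adj :: 'a \<times> 'a \<Rightarrow> _) UNIV \<le> card CS"
    by (rule chromatic_le[where col = col]) (use col_in col_proper in auto)
  then show ?thesis using card_CS by linarith
qed

end

theorem theorem3p4:
  fixes \<mu> :: "'k::{finite,field}" and r t :: nat
  assumes "\<exists>(p::nat) (n::nat). prime p \<and> odd p \<and> n > 0 \<and> CARD('k) = p ^ n"
    and "r \<ge> 1" and "t = 2 * r + 1"
    and "CARD('K::{finite,field}) = CARD('k) ^ t"
    and "irreducible (monom 1 (2 * r + 1) - [:\<mu>:])"
  shows "real (chromatic_number (G_adj :: 'K \<times> 'K \<Rightarrow> _) UNIV)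
           \<le> (2 * real r + 5) / 3 * real CARD('k) powr (4 * real r / 3 + 1)
             + (2 * real r + 1) * real CARD('k) ^ (r + 1)"
proof -
  obtain p n where pn: "prime p" "odd p" "n > 0" "CARD('k) = p ^ n" using assms(1) by blast
  define q where "q = CARD('k)"
  have irr: "irreducible (monom 1 t - [:\<mu>:])" using assms(3,5) by simp
  have ntq: "l dvd q - 1" if "prime l" "l dvd t" for l
    unfolding q_def by (rule prime_dvd_card_minus1[OF irr that]) (use assms(3) in simp)
  have cpos: "CHAR('K) > 0" by (rule finite_imp_CHAR_pos) simp
  have cprime: "prime CHAR('K)" by (rule prime_CHAR_semidom[OF cpos])
  have "CHAR('K) dvd CARD('K)" by (rule CHAR_dvd_CARD)
  moreover have "CARD('K) = p ^ (n * t)" using assms(4) pn(4) by (simp add: power_mult)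
  ultimately have "CHAR('K) dvd p" using cprime prime_dvd_power by metis
  then have charK: "CHAR('K) = p" using cprime pn(1) by (simp add: primes_dvd_imp_eq)
  obtain g :: 'K where g: "g \<noteq> 0" "\<And>x. x \<noteq> 0 \<Longrightarrow> \<exists>i. x = g ^ i" using exists_gen by blast
  interpret FS: fstruct q r t n g
  proof
    show "q = CHAR('K) ^ n" using charK pn(4) q_def by simp
    show "prime CHAR('K)" by (rule cprime)
    show "CHAR('K) \<noteq> 2" using charK pn(2) by auto
    show "n > 0" by (rule pn(3))
    show "CARD('K) = q ^ t" using assms(4) q_def by simp
    show "t = 2 * r + 1" by (rule assms(3))
    show "r \<ge> 1" by (rule assms(2))
    show "g \<noteq> 0" by (rule g(1))
    show "\<And>x. x \<noteq> 0 \<Longrightarrow> \<exists>i. x = g ^ i" by (rule g(2))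
    show "\<And>l. prime l \<Longrightarrow> l dvd t \<Longrightarrow> l dvd q - 1" by (rule ntq)
  qed
  have chi: "chromatic_number (G_adj :: 'K \<times> 'K \<Rightarrow> _) UNIV \<le> 1 + t * (2 * q ^ (r + 1))"
    by (rule FS.chi_bound)
  have q3: "real q \<ge> 3" using FS.q3 by simp
  have "real (chromatic_number (G_adj :: 'K \<times> 'K \<Rightarrow> _) UNIV) \<le> real (1 + t * (2 * q ^ (r + 1)))"
    using chi by linarith
  also have "\<dots> = 1 + real (2 * r + 1) * (2 * real q ^ (r + 1))" using assms(3) by (simp add: algebra_simps)
  also have "\<dots> \<le> (2 * real r + 5) / 3 * real q powr (4 * real r / 3 + 1) + (2 * real r + 1) * real q ^ (r + 1)"
    by (rule real_ineq[OF q3 assms(2)])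
  finally show ?thesis unfolding q_def .
qed

end
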